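(* Let $v$ be a positive integer all of whose maximal prime power factors (i.e. the prime powers $p^e$ with $p^e\mid v$, $p^{e+1}\nmid v$) are congruent to $1$ modulo $4$. Then there exists a $(3v,3,4,1)$-BRDF.
   Context: Let $G$ be a finite group written additively, $H$ a subgroup, and $k\ge2,\lambda\ge1$ integers. A $(G,H,k,\lambda)$-relative difference family (RDF) is a collection of $k$-subsets of $G$ (base blocks) such that the multiset of differences $x-y$ ($x\ne y$ in a common base block) contains every element of $G\setminus H$ exactly $\lambda$ times and no element of $H$. A $(G,H,k,\lambda)$-Banff relative difference family (BRDF) is a $(G,H,k,\lambda)$-RDF such that additionally (2) all base blocks are disjoint from $H$, and (3) the base blocks and their negatives $-B=\{-b:b\in B\}$ are pairwise disjoint. A $(g,h,k,\lambda)$-BRDF means a $(G,H,k,\lambda)$-BRDF for some group $G$ of order $g$ and subgroup $H$ of order $h$. *)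

theory Defs
  imports "HOL-Algebra.Algebra" "HOL-Computational_Algebra.Primes"
begin

text \<open>Groups are HOL-Algebra groups; the paper's additive difference x - y is
  written x \<otimes> inv y. Base blocks form a list (a finite collection).\<close>

definition diff_count :: "('a, 'b) monoid_scheme \<Rightarrow> 'a set list \<Rightarrow> 'a \<Rightarrow> nat" where
  "diff_count G Bs d =
     (\<Sum>B\<leftarrow>Bs. card {(x, y). x \<in> B \<and> y \<in> B \<and> x \<noteq> y \<and> x \<otimes>\<^bsub>G\<^esub> inv\<^bsub>G\<^esub> y = d})"

definition is_RDF :: "('a, 'b) monoid_scheme \<Rightarrow> 'a set \<Rightarrow> nat \<Rightarrow> nat \<Rightarrow> 'a set list \<Rightarrow> bool" where
  "is_RDF G H k lam Bs \<longleftrightarrow>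
     (\<forall>B\<in>set Bs. B \<subseteq> carrier G \<and> finite B \<and> card B = k) \<and>
     (\<forall>d\<in>carrier G - H. diff_count G Bs d = lam) \<and>
     (\<forall>d\<in>H. diff_count G Bs d = 0)"

definition neg_block :: "('a, 'b) monoid_scheme \<Rightarrow> 'a set \<Rightarrow> 'a set" where
  "neg_block G B = (\<lambda>b. inv\<^bsub>G\<^esub> b) ` B"

definition is_BRDF :: "('a, 'b) monoid_scheme \<Rightarrow> 'a set \<Rightarrow> nat \<Rightarrow> nat \<Rightarrow> 'a set list \<Rightarrow> bool" where
  "is_BRDF G H k lam Bs \<longleftrightarrow>
     is_RDF G H k lam Bs \<and>
     (\<forall>B\<in>set Bs. B \<inter> H = {}) \<and>
     (let L = Bs @ map (neg_block G) Bs in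
        \<forall>i<length L. \<forall>j<length L. i \<noteq> j \<longrightarrow> L ! i \<inter> L ! j = {})"

text \<open>A (g,h,k,\<lambda>)-BRDF exists: some finite group of order g (carrier realised
  inside nat, which is no loss since every finite group is isomorphic to one) with a
  subgroup of order h carrying a BRDF.\<close>
definition exists_BRDF :: "nat \<Rightarrow> nat \<Rightarrow> nat \<Rightarrow> nat \<Rightarrow> bool" where
  "exists_BRDF g h k lam \<longleftrightarrow>
     (\<exists>(G :: nat monoid) H Bs. group G \<and> finite (carrier G) \<and> card (carrier G) = g \<and>
        subgroup H G \<and> card H = h \<and> is_BRDF G H k lam Bs)"

end

theory Submission
  imports Defs "HOL-Number_Theory.Number_Theory" "HOL-Library.Product_Plus" "HOL-Library.Product_Lexorder" "HOL-Library.Countable"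
begin


lemma sqrt_m1_prime:
  fixes p :: nat
  assumes "Factorial_Ring.prime p" "p mod 4 = 1"
  shows "\<exists>y::int. [y*y = -1] (mod int p)"
proof -
  have p5: "p \<ge> 5"
  proof -
    have "p \<ge> 2" using assms(1) prime_ge_2_nat by blast
    thus "p \<ge> 5" using assms(2) by presburger
  qed
  have ev: "even ((p - 1) div 2)" using assms(2) by presburger
  have c: "[Legendre (-1) (int p) = (-1) ^ ((p - 1) div 2)] (mod int p)"
    using euler_criterion[OF assms(1)] p5 by simp
  hence c1: "[Legendre (-1) (int p) = 1] (mod int p)" using ev by simp
  show ?thesis
  proof (cases "QuadRes (int p) (-1)")
    case True
    then show ?thesis unfolding QuadRes_def by (auto simp: power2_eq_square)
  next
    case False
    have "\<not> [-1 = 0] (mod int p)"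
    proof
      assume "[-1 = 0] (mod int p)"
      hence "int p dvd 1" by (simp add: cong_iff_dvd_diff) 
      thus False using p5 by simp
    qed
    hence "Legendre (-1) (int p) = -1" using False unfolding Legendre_def by auto
    hence "[-1 = 1] (mod int p)" using c1 by simp
    hence "int p dvd 2" by (simp add: cong_iff_dvd_diff)
    hence "p dvd 2" by (metis int_dvd_int_iff of_nat_numeral)
    hence "p \<le> 2" by (simp add: dvd_imp_le)
    thus ?thesis using p5 by simp
  qed
qed

lemma pow_mod4:
  fixes p e :: nat
  assumes "p ^ e mod 4 = 1" "odd e"
  shows "p mod 4 = 1"
proof -
  obtain k where e: "e = 2*k+1" using assms(2) oddE by blast
  have "odd (p^e)" using assms(1) by presburger
  hence "odd p" using e by simp
  hence "p mod 4 = 1 \<or> p mod 4 = 3" by presburger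
  moreover have "p mod 4 \<noteq> 3"
  proof
    assume "p mod 4 = 3"
    have "p ^ e mod 4 = (p mod 4) ^ e mod 4" by (simp add: power_mod)
    also have "\<dots> = 3 * 9 ^ k mod 4" using \<open>p mod 4 = 3\<close> e by (simp add: power_mult power_add)
    also have "\<dots> = 3 * (9 ^ k mod 4) mod 4" by (simp add: mod_mult_right_eq)
    also have "(9::nat) ^ k mod 4 = 1" using power_mod[of "9::nat" 4 k] by simp
    finally show False using assms(1) by simp
  qed
  ultimately show ?thesis by blast
qed

lemma decomp:
  fixes v :: nat
  assumes "v > 0"
    and "\<forall>p. Factorial_Ring.prime p \<and> p dvd v \<longrightarrow> p ^ Factorial_Ring.multiplicity p v mod 4 = 1"
  shows "\<exists>w r (j::int). v = w^2 * r \<and> odd w \<and> odd r \<and> [j*j = -1] (mod int r)"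
  using assms
proof (induction v rule: less_induct)
  case (less v)
  show ?case
  proof (cases "v = 1")
    case True
    then show ?thesis by (intro exI[of _ 1] exI[of _ "1::nat"] exI[of _ 0]) auto
  next
    case False
    then obtain p where p: "Factorial_Ring.prime p" "p dvd v" using prime_factor_nat by blast
    define e where "e = Factorial_Ring.multiplicity p v"
    have vn0: "v \<noteq> 0" using less.prems(1) by simp
    have pnu: "\<not> is_unit p" using prime_ge_2_nat[OF p(1)] by simp
    obtain v' where v'x: "v = p ^ Factorial_Ring.multiplicity p v * v'" "\<not> p dvd v'"
      by (rule multiplicity_decompose'[OF vn0 pnu])
    have v': "v = p ^ e * v'" "\<not> p dvd v'" using v'x unfolding e_def by simp_all
    have e0: "e \<noteq> 0"
    proof
      assume "e = 0" hence "v = v'" using v'(1) by simp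
      thus False using p(2) v'(2) by simp
    qed
    have "v' \<noteq> 0" using v'(1) vn0 by (cases "v' = 0") simp_all
    hence v'0: "v' > 0" by simp
    have p2: "p \<ge> 2" using p prime_ge_2_nat by blast
    have "p ^ e \<ge> 2 ^ e" using p2 by (simp add: power_mono)
    moreover have "(2::nat) ^ e \<ge> 2 ^ 1" using e0 by (intro power_increasing) auto
    ultimately have "p ^ e \<ge> 2" by simp
    hence "1 * v' < p^e * v'" using v'0 by (intro mult_strict_right_mono) auto
    hence lt: "v' < v" using v'(1) by simp
    have hyp': "\<forall>q. Factorial_Ring.prime q \<and> q dvd v' \<longrightarrow> q ^ Factorial_Ring.multiplicity q v' mod 4 = 1"
    proof (intro allI impI)
      fix q assume q: "Factorial_Ring.prime q \<and> q dvd v'"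
      have qv: "q dvd v" using q v' by simp
      have qp: "q \<noteq> p" using q v' by auto
      have "Factorial_Ring.multiplicity q v = Factorial_Ring.multiplicity q (p^e) + Factorial_Ring.multiplicity q v'"
        using v' v'0 p q by (simp add: prime_elem_multiplicity_mult_distrib)
      also have "Factorial_Ring.multiplicity q (p^e) = 0" using multiplicity_distinct_prime_power p q qp by blast
      finally have mq: "Factorial_Ring.multiplicity q v = Factorial_Ring.multiplicity q v'" by simp
      have "q ^ Factorial_Ring.multiplicity q v mod 4 = 1" using less.prems(2) q qv by blast
      thus "q ^ Factorial_Ring.multiplicity q v' mod 4 = 1" using mq by simp
    qed
    obtain w' r' j' where IH: "v' = w'^2 * r'" "odd w'" "odd r'" "[j'*j' = -1] (mod int r')"
      using less.IH[OF lt v'0 hyp'] by blast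
    have pe: "p ^ e mod 4 = 1" using less.prems(2) p e_def by simp
    have "odd (p ^ e)"
    proof
      assume "even (p^e)" then obtain m where "p^e = 2*m" by blast
      with pe show False by presburger
    qed
    hence oddp: "odd p" using e0 by simp
    show ?thesis
    proof (cases "even e")
      case True
      then obtain k where k: "e = 2*k" by blast
      have "v = (p^k)^2 * (w'^2 * r')" using v'(1) IH(1) k by (simp add: power_even_eq)
      hence "v = (p^k * w')^2 * r'" by (simp add: power_mult_distrib mult.assoc)
      moreover have "odd (p^k * w')" using oddp IH by simp
      ultimately show ?thesis using IH by blast
    next
      case False
      then obtain k where k: "e = 2*k+1" using oddE by blast
      have pm: "p mod 4 = 1" using pow_mod4[OF pe False] .
      obtain y where y: "[y*y = -1] (mod int p)" using sqrt_m1_prime[OF p(1) pm] by blast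
      have "\<not> p dvd r'" by (metis IH(1) dvd_triv_right dvd_trans v'(2))
      hence cop: "coprime (int p) (int r')" using p(1) by (simp add: prime_imp_coprime)
      obtain j where j: "[j = y] (mod int p)" "[j = j'] (mod int r')"
        using binary_chinese_remainder_int[OF cop] by blast
      have "[j*j = y*y] (mod int p)" using j(1) by (simp add: cong_mult)
      hence j1: "[j*j = -1] (mod int p)" using y cong_trans by blast
      have "[j*j = j'*j'] (mod int r')" using j(2) by (simp add: cong_mult)
      hence j2: "[j*j = -1] (mod int r')" using IH(4) cong_trans by blast
      have "[j*j = -1] (mod int p * int r')" using coprime_cong_mult[OF j1 j2 cop] .
      hence jj: "[j*j = -1] (mod int (p * r'))" by simp
      have "v = ((p^k)^2 * p) * (w'^2 * r')" using v'(1) IH(1) k by (simp add: power_even_eq power_add)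
      hence "v = (p^k * w')^2 * (p * r')" by (simp add: power_mult_distrib ac_simps)
      moreover have "odd (p^k * w')" "odd (p * r')" using oddp IH by simp_all
      ultimately show ?thesis using jj by blast
    qed
  qed
qed



lemma odd_dvd2: fixes m x :: int assumes "odd m" "m dvd 2*x" shows "m dvd x"
proof -
  have "coprime m 2" using assms(1) by simp
  thus ?thesis using assms(2) by (simp add: coprime_dvd_mult_right_iff)
qed

lemma mod_self_iff: fixes m x :: int assumes "0 < m" shows "x mod m = x \<longleftrightarrow> 0 \<le> x \<and> x < m"
  using assms by (metis pos_mod_sign pos_mod_bound mod_pos_pos_trivial)

locale cons =
  fixes w r j :: int
  assumes w0: "w > 0" and r0: "r > 0" and ow: "odd w" and orr: "odd r"
    and jj: "[j*j = -1] (mod r)"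
begin

lemma jdvd: "r dvd (j*j + 1)" using jj by (simp add: cong_iff_dvd_diff)

definition rd :: "int \<times> int \<times> int \<Rightarrow> int \<times> int \<times> int" where
  "rd u = (case u of (x,y,z) \<Rightarrow> (x mod w, y mod w, z mod r))"
lemma rd_simp[simp]: "rd (x,y,z) = (x mod w, y mod w, z mod r)" by (simp add: rd_def)

definition ph :: "int \<times> int \<times> int \<Rightarrow> int \<times> int \<times> int" where
  "ph u = (case u of (x,y,z) \<Rightarrow> (-y, x, j*z))"
lemma ph_simp[simp]: "ph (x,y,z) = (-y, x, j*z)" by (simp add: ph_def)

lemma ph_add[simp]: "ph (u + v) = ph u + ph v"
  by (cases u rule: prod_cases3; cases v rule: prod_cases3) (simp add: algebra_simps)
lemma ph_neg[simp]: "ph (- u) = - ph u"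
  by (cases u rule: prod_cases3) simp
lemma ph_diff[simp]: "ph (u - v) = ph u - ph v"
  by (cases u rule: prod_cases3; cases v rule: prod_cases3) (simp add: algebra_simps)
lemma ph_zero[simp]: "ph 0 = 0" by (simp add: zero_prod_def)
lemma rd_zero[simp]: "rd 0 = 0" by (simp add: zero_prod_def)

lemma rd_rd[simp]: "rd (rd u) = rd u"
  by (cases u rule: prod_cases3) simp
lemma rd_add1[simp]: "rd (rd u + v) = rd (u + v)"
  by (cases u rule: prod_cases3; cases v rule: prod_cases3) (simp add: mod_add_left_eq)
lemma rd_add2[simp]: "rd (u + rd v) = rd (u + v)"
  by (cases u rule: prod_cases3; cases v rule: prod_cases3) (simp add: mod_add_right_eq)
lemma rd_diff1[simp]: "rd (rd u - v) = rd (u - v)"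
  by (cases u rule: prod_cases3; cases v rule: prod_cases3) (simp add: mod_diff_left_eq)
lemma rd_diff2[simp]: "rd (u - rd v) = rd (u - v)"
  by (cases u rule: prod_cases3; cases v rule: prod_cases3) (simp add: mod_diff_right_eq)
lemma rd_neg[simp]: "rd (- rd u) = rd (- u)"
  by (cases u rule: prod_cases3) (simp add: mod_minus_eq)
lemma rd_ph[simp]: "rd (ph (rd u)) = rd (ph u)"
  by (cases u rule: prod_cases3) (simp add: mod_minus_eq mod_mult_right_eq)
lemma rd_neg_ph[simp]: "rd (- ph (rd u)) = rd (- ph u)"
proof -
  have "rd (- ph (rd u)) = rd (- rd (ph (rd u)))" by (rule rd_neg[symmetric])
  also have "\<dots> = rd (- rd (ph u))" by (simp only: rd_ph)
  also have "\<dots> = rd (- ph u)" by (rule rd_neg)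
  finally show ?thesis .
qed

lemma jjz: "(j*(j*z)) mod r = (-z) mod r"
proof -
  have "r dvd (j*j+1)*z" using jdvd by simp
  hence "r dvd j*(j*z) - (-z)" by (simp add: algebra_simps)
  thus ?thesis by (simp add: mod_eq_dvd_iff)
qed

lemma rd_phph: "rd (ph (ph u)) = rd (- u)"
  by (cases u rule: prod_cases3) (simp add: jjz)
lemma rd_neg_phph: "rd (- ph (ph u)) = rd u"
proof -
  have "rd (- ph (ph u)) = rd (- rd (ph (ph u)))" by (rule rd_neg[symmetric])
  also have "\<dots> = rd (- rd (- u))" by (simp only: rd_phph)
  also have "\<dots> = rd u" by (simp only: rd_neg minus_minus)
  finally show ?thesis .
qed

lemma rd_LI: "rd (u - ph (ph u)) = rd (u + u)"
proof -
  have "rd (u - ph (ph u)) = rd (u - rd (ph (ph u)))" by (rule rd_diff2[symmetric])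
  also have "\<dots> = rd (u - rd (- u))" by (simp only: rd_phph)
  also have "\<dots> = rd (u + u)" by (simp only: rd_diff2 diff_minus_eq_add)
  finally show ?thesis .
qed

lemma rd_zero_iff: "rd (x,y,z) = 0 \<longleftrightarrow> w dvd x \<and> w dvd y \<and> r dvd z"
  by (simp add: zero_prod_def dvd_eq_mod_eq_0)

lemma rd_eq_iff_diff: "rd u = rd v \<longleftrightarrow> rd (u - v) = 0"
  by (cases u rule: prod_cases3; cases v rule: prod_cases3)
     (simp add: zero_prod_def mod_eq_dvd_iff dvd_eq_mod_eq_0[symmetric])

lemma Kz1: assumes "r dvd (z - j*z)" shows "r dvd z"
proof -
  have a: "r dvd (1+j)*(z - j*z)" using assms by simp
  have b: "r dvd (j*j+1)*z" using jdvd by simp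
  have "r dvd (1+j)*(z - j*z) + (j*j+1)*z" using a b by (rule dvd_add)
  moreover have "(1+j)*(z - j*z) + (j*j+1)*z = 2*z" by (simp add: algebra_simps)
  ultimately have "r dvd 2*z" by simp
  thus ?thesis using orr odd_dvd2 by blast
qed

lemma Kz2: assumes "r dvd (z + j*z)" shows "r dvd z"
proof -
  have a: "r dvd (1-j)*(z + j*z)" using assms by simp
  have b: "r dvd (j*j+1)*z" using jdvd by simp
  have "r dvd (1-j)*(z + j*z) + (j*j+1)*z" using a b by (rule dvd_add)
  moreover have "(1-j)*(z + j*z) + (j*j+1)*z = 2*z" by (simp add: algebra_simps)
  ultimately have "r dvd 2*z" by simp
  thus ?thesis using orr odd_dvd2 by blast
qed

lemma K0: assumes "rd (u + u) = 0" shows "rd u = 0"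
proof (cases u rule: prod_cases3)
  case (fields x y z)
  have "rd (x+x, y+y, z+z) = 0" using assms fields by simp
  hence "w dvd x+x \<and> w dvd y+y \<and> r dvd z+z" by (subst (asm) rd_zero_iff)
  hence "w dvd 2*x" "w dvd 2*y" "r dvd 2*z" by (simp_all only: mult_2)
  hence "w dvd x" "w dvd y" "r dvd z" using ow orr odd_dvd2 by blast+
  hence "rd (x,y,z) = 0" by (subst rd_zero_iff) simp
  then show ?thesis using fields by simp
qed

lemma K1: assumes "rd (u - ph u) = 0" shows "rd u = 0"
proof (cases u rule: prod_cases3)
  case (fields x y z)
  have "rd (x + y, y - x, z - j*z) = 0" using assms fields by simp
  hence h: "w dvd x + y" "w dvd y - x" "r dvd z - j*z" by (subst (asm) rd_zero_iff; simp)+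
  have "w dvd (x + y) + (y - x)" using h(1) h(2) by (rule dvd_add)
  hence "w dvd 2*y" by (simp add: algebra_simps mult_2)
  hence y: "w dvd y" using ow odd_dvd2 by blast
  have "w dvd (x + y) - y" using h(1) y by (rule dvd_diff)
  hence x: "w dvd x" by simp
  have "rd (x,y,z) = 0" using x y Kz1[OF h(3)] by (subst rd_zero_iff) simp
  then show ?thesis using fields by simp
qed

lemma K2: assumes "rd (u + ph u) = 0" shows "rd u = 0"
proof (cases u rule: prod_cases3)
  case (fields x y z)
  have "rd (x - y, y + x, z + j*z) = 0" using assms fields by simp
  hence h: "w dvd x - y" "w dvd y + x" "r dvd z + j*z" by (subst (asm) rd_zero_iff; simp)+
  have "w dvd (y + x) - (x - y)" using h(2) h(1) by (rule dvd_diff)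
  hence "w dvd 2*y" by (simp add: algebra_simps mult_2)
  hence y: "w dvd y" using ow odd_dvd2 by blast
  have "w dvd (x - y) + y" using h(1) y by (rule dvd_add)
  hence x: "w dvd x" by simp
  have "rd (x,y,z) = 0" using x y Kz2[OF h(3)] by (subst rd_zero_iff) simp
  then show ?thesis using fields by simp
qed

lemma K3: assumes "rd (ph u) = 0" shows "rd u = 0"
proof -
  have "rd (ph (ph u)) = rd (ph (rd (ph u)))" by (rule rd_ph[symmetric])
  also have "\<dots> = 0" using assms by simp
  finally have "rd (- u) = 0" by (simp add: rd_phph)
  hence "rd (- rd (- u)) = 0" by (simp only: rd_neg neg_0_equal_iff_equal) (simp add: zero_prod_def)
  thus ?thesis by (simp only: rd_neg minus_minus)
qed

lemma dist:
  assumes "rd s \<noteq> 0"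
  shows "rd s \<noteq> rd (ph s)" "rd s \<noteq> rd (-s)" "rd s \<noteq> rd (- ph s)"
    "rd (ph s) \<noteq> rd (-s)" "rd (ph s) \<noteq> rd (- ph s)" "rd (-s) \<noteq> rd (- ph s)"
proof -
  show a: "rd s \<noteq> rd (ph s)"
  proof
    assume "rd s = rd (ph s)" hence "rd (s - ph s) = 0" by (subst (asm) rd_eq_iff_diff)
    thus False using K1 assms by blast
  qed
  show "rd s \<noteq> rd (-s)"
  proof
    assume "rd s = rd (-s)" hence "rd (s - - s) = 0" by (subst (asm) rd_eq_iff_diff)
    hence "rd (s + s) = 0" by (simp only: diff_minus_eq_add)
    thus False using K0 assms by blast
  qed
  show "rd s \<noteq> rd (- ph s)"
  proof
    assume "rd s = rd (- ph s)" hence "rd (s - - ph s) = 0" by (subst (asm) rd_eq_iff_diff)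
    hence "rd (s + ph s) = 0" by (simp only: diff_minus_eq_add)
    thus False using K2 assms by blast
  qed
  show "rd (ph s) \<noteq> rd (-s)"
  proof
    assume "rd (ph s) = rd (-s)" hence "rd (ph s - - s) = 0" by (subst (asm) rd_eq_iff_diff)
    hence "rd (s + ph s) = 0" by (simp only: diff_minus_eq_add add.commute)
    thus False using K2 assms by blast
  qed
  show "rd (ph s) \<noteq> rd (- ph s)"
  proof
    assume "rd (ph s) = rd (- ph s)" hence "rd (ph s - - ph s) = 0" by (subst (asm) rd_eq_iff_diff)
    hence "rd (ph s + ph s) = 0" by (simp only: diff_minus_eq_add)
    hence "rd (ph s) = 0" by (rule K0)
    thus False using K3 assms by blast
  qed
  show "rd (-s) \<noteq> rd (- ph s)"
  proof
    assume "rd (-s) = rd (- ph s)"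
    hence "rd (- rd (-s)) = rd (- rd (- ph s))" by simp
    hence "rd s = rd (ph s)" by (simp only: rd_neg minus_minus)
    thus False using a by simp
  qed
qed


definition Acar :: "(int \<times> int \<times> int) set" where "Acar = {u. rd u = u}"

lemma Acar_eq: "Acar = {0..<w} \<times> {0..<w} \<times> {0..<r}"
proof -
  have "rd (x,y,z) = (x,y,z) \<longleftrightarrow> (x,y,z) \<in> {0..<w} \<times> {0..<w} \<times> {0..<r}" for x y z
    using mod_self_iff[OF w0, of x] mod_self_iff[OF w0, of y] mod_self_iff[OF r0, of z] by auto
  thus ?thesis unfolding Acar_def by auto
qed

lemma fin_Acar: "finite Acar" by (simp add: Acar_eq)
lemma card_Acar: "card Acar = nat w * nat w * nat r"
  by (simp add: Acar_eq card_cartesian_product)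
lemma zero_Acar: "0 \<in> Acar" by (simp add: Acar_def)
lemma rd_Acar[simp]: "rd u \<in> Acar" by (simp add: Acar_def)

definition Orb :: "int \<times> int \<times> int \<Rightarrow> (int \<times> int \<times> int) set" where
  "Orb u = {rd u, rd (ph u), rd (- u), rd (- ph u)}"

lemma Orb_rd[simp]: "Orb (rd u) = Orb u"
  by (simp add: Orb_def)
lemma Orb_ph: "Orb (ph u) = Orb u"
  unfolding Orb_def by (auto simp: rd_phph rd_neg_phph)
lemma Orb_neg: "Orb (- u) = Orb u"
  unfolding Orb_def by auto
lemma Orb_mem: assumes "b \<in> Orb u" shows "Orb b = Orb u"
proof -
  from assms have "b = rd u \<or> b = rd (ph u) \<or> b = rd (-u) \<or> b = rd (- ph u)" by (simp add: Orb_def)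
  thus ?thesis by (elim disjE) (simp_all add: Orb_ph Orb_neg)
qed
lemma mem_Orb: "u \<in> Acar \<Longrightarrow> u \<in> Orb u"
  by (simp add: Orb_def Acar_def)
lemma Orb_sub: "Orb u \<subseteq> Acar" by (simp add: Orb_def)
lemma Orb_fin: "finite (Orb u)" by (simp add: Orb_def)
lemma Orb_zero: "Orb 0 = {0}" by (simp add: Orb_def)
lemma Orb_nz: assumes "rd u \<noteq> 0" shows "0 \<notin> Orb u"
proof
  assume "0 \<in> Orb u"
  hence "Orb 0 = Orb u" by (rule Orb_mem)
  hence "rd u \<in> Orb 0" by (simp add: Orb_def)
  thus False using assms Orb_zero by simp
qed

lemma card_Orb: assumes "rd u \<noteq> 0" shows "card (Orb u) = 4"
  using dist[OF assms] by (simp add: Orb_def)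

definition S :: "(int \<times> int \<times> int) set" where
  "S = {s \<in> Acar. s \<noteq> 0 \<and> Min (Orb s) = s}"

lemma S_sub: "S \<subseteq> Acar" by (auto simp: S_def)
lemma fin_S: "finite S" using S_sub fin_Acar finite_subset by blast
lemma S_rd: "s \<in> S \<Longrightarrow> rd s = s" by (auto simp: S_def Acar_def)
lemma S_nz: "s \<in> S \<Longrightarrow> rd s \<noteq> 0" by (auto simp: S_def Acar_def)

lemma S_disj: assumes "s \<in> S" "s' \<in> S" "x \<in> Orb s" "x \<in> Orb s'" shows "s = s'"
proof -
  have "Orb s = Orb s'" using Orb_mem[OF assms(3)] Orb_mem[OF assms(4)] by simp
  thus ?thesis using assms(1,2) by (simp add: S_def)
qed

lemma rep: assumes "u \<in> Acar" "u \<noteq> 0"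
  shows "Min (Orb u) \<in> S" "u \<in> Orb (Min (Orb u))"
proof -
  define m where "m = Min (Orb u)"
  have mi: "m \<in> Orb u" unfolding m_def using Orb_fin by (rule Min_in) (simp add: Orb_def)
  have om: "Orb m = Orb u" using Orb_mem[OF mi] .
  have ru: "rd u \<noteq> 0" using assms by (simp add: Acar_def)
  have "m \<in> Acar" using mi Orb_sub by blast
  moreover have "m \<noteq> 0" using mi Orb_nz[OF ru] by auto
  moreover have "Min (Orb m) = m" using om m_def by simp
  ultimately show "Min (Orb u) \<in> S" unfolding S_def m_def[symmetric] by simp
  show "u \<in> Orb (Min (Orb u))" using om mem_Orb[OF assms(1)] m_def by simp
qed

lemma cover: "Acar - {0} = (\<Union>s\<in>S. Orb s)"
proof
  show "Acar - {0} \<subseteq> (\<Union>s\<in>S. Orb s)" using rep by blast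
  show "(\<Union>s\<in>S. Orb s) \<subseteq> Acar - {0}" using Orb_sub Orb_nz S_nz by blast
qed

lemma card_S: "card (Acar - {0}) = 4 * card S"
proof -
  have "card (\<Union>s\<in>S. Orb s) = (\<Sum>s\<in>S. card (Orb s))"
    by (rule card_UN_disjoint) (auto simp: fin_S Orb_fin dest: S_disj)
  also have "\<dots> = (\<Sum>s\<in>S. 4)" using card_Orb S_nz by simp
  finally show ?thesis using cover by simp
qed


lemma rd_phd1[simp]: "rd (ph (rd u) - v) = rd (ph u - v)"
proof -
  have "rd (ph (rd u) - v) = rd (rd (ph (rd u)) - v)" by (rule rd_diff1[symmetric])
  also have "\<dots> = rd (rd (ph u) - v)" by (simp only: rd_ph)
  also have "\<dots> = rd (ph u - v)" by (rule rd_diff1)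
  finally show ?thesis .
qed
lemma rd_phd2[simp]: "rd (v - ph (rd u)) = rd (v - ph u)"
proof -
  have "rd (v - ph (rd u)) = rd (v - rd (ph (rd u)))" by (rule rd_diff2[symmetric])
  also have "\<dots> = rd (v - rd (ph u))" by (simp only: rd_ph)
  also have "\<dots> = rd (v - ph u)" by (rule rd_diff2)
  finally show ?thesis .
qed

definition red :: "int \<times> int \<times> int \<times> int \<Rightarrow> int \<times> int \<times> int \<times> int" where
  "red g = (fst g mod 3, rd (snd g))"
lemma red_simp[simp]: "red (t, a) = (t mod 3, rd a)" by (simp add: red_def)
lemma red_zero[simp]: "red 0 = 0" by (simp add: red_def zero_prod_def)
lemma red_red[simp]: "red (red g) = red g" by (cases g) simp
lemma red_add1[simp]: "red (red g + h) = red (g + h)"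
  by (cases g; cases h) (simp add: mod_add_left_eq)
lemma red_add2[simp]: "red (g + red h) = red (g + h)"
  by (cases g; cases h) (simp add: mod_add_right_eq)

definition Gc :: "(int \<times> int \<times> int \<times> int) monoid" where
  "Gc = \<lparr>carrier = {g. red g = g}, monoid.mult = (\<lambda>g h. red (g + h)), one = 0\<rparr>"

lemma Gc_carrier[simp]: "carrier Gc = {g. red g = g}" by (simp add: Gc_def)
lemma Gc_mult[simp]: "g \<otimes>\<^bsub>Gc\<^esub> h = red (g + h)" by (simp add: Gc_def)
lemma Gc_one[simp]: "\<one>\<^bsub>Gc\<^esub> = 0" by (simp add: Gc_def)

lemma grp: "group Gc"
proof (rule groupI)
  show "\<And>x y. x \<in> carrier Gc \<Longrightarrow> y \<in> carrier Gc \<Longrightarrow> x \<otimes>\<^bsub>Gc\<^esub> y \<in> carrier Gc" by simp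
  show "\<one>\<^bsub>Gc\<^esub> \<in> carrier Gc" by simp
  show "\<And>x y z. x \<in> carrier Gc \<Longrightarrow> y \<in> carrier Gc \<Longrightarrow> z \<in> carrier Gc \<Longrightarrow>
     x \<otimes>\<^bsub>Gc\<^esub> y \<otimes>\<^bsub>Gc\<^esub> z = x \<otimes>\<^bsub>Gc\<^esub> (y \<otimes>\<^bsub>Gc\<^esub> z)"
    by (simp add: add.assoc)
  show "\<And>x. x \<in> carrier Gc \<Longrightarrow> \<one>\<^bsub>Gc\<^esub> \<otimes>\<^bsub>Gc\<^esub> x = x" by simp
  show "\<And>x. x \<in> carrier Gc \<Longrightarrow> \<exists>y\<in>carrier Gc. y \<otimes>\<^bsub>Gc\<^esub> x = \<one>\<^bsub>Gc\<^esub>"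
  proof -
    fix x assume "x \<in> carrier Gc"
    have "red (red (- x) + x) = 0" by simp
    thus "\<exists>y\<in>carrier Gc. y \<otimes>\<^bsub>Gc\<^esub> x = \<one>\<^bsub>Gc\<^esub>" by (intro bexI[of _ "red (- x)"]) simp_all
  qed
qed

lemma inv_Gc: assumes "x \<in> carrier Gc" shows "inv\<^bsub>Gc\<^esub> x = red (- x)"
  by (rule group.inv_equality[OF grp]) (use assms in simp_all)

lemma diff_Gc: assumes "x \<in> carrier Gc" "y \<in> carrier Gc"
  shows "x \<otimes>\<^bsub>Gc\<^esub> inv\<^bsub>Gc\<^esub> y = red (x - y)"
  using assms by (simp add: inv_Gc)

definition H0 :: "(int \<times> int \<times> int \<times> int) set" where
  "H0 = {g. red g = g \<and> snd g = 0}"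

lemma H0_eq: "H0 = (\<lambda>t. (t, 0)) ` {0..<3}"
proof -
  have "g \<in> H0 \<longleftrightarrow> g \<in> (\<lambda>t. (t, 0)) ` {0..<3}" for g
  proof -
    obtain t a where g: "g = (t, a)" by (cases g)
    have "g \<in> H0 \<longleftrightarrow> t mod 3 = t \<and> rd a = a \<and> a = 0" by (simp add: H0_def g)
    also have "\<dots> \<longleftrightarrow> t \<in> {0..<3} \<and> a = 0" using mod_self_iff[of 3 t] by auto
    also have "\<dots> \<longleftrightarrow> g \<in> (\<lambda>t. (t, 0)) ` {0..<3}" using g by auto
    finally show ?thesis .
  qed
  thus ?thesis by blast
qed

lemma card_H0: "card H0 = 3"
  by (simp add: H0_eq card_image inj_on_def)

lemma sub_H0: "subgroup H0 Gc"
proof (rule group.subgroupI[OF grp])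
  show "H0 \<subseteq> carrier Gc" by (auto simp: H0_def)
  show "H0 \<noteq> {}" by (simp add: H0_eq)
  show "\<And>a. a \<in> H0 \<Longrightarrow> inv\<^bsub>Gc\<^esub> a \<in> H0"
  proof -
    fix a assume a: "a \<in> H0"
    then obtain t where "a = (t, 0)" by (cases a) (auto simp: H0_def)
    thus "inv\<^bsub>Gc\<^esub> a \<in> H0" using a by (simp add: inv_Gc H0_def)
  qed
  show "\<And>a b. a \<in> H0 \<Longrightarrow> b \<in> H0 \<Longrightarrow> a \<otimes>\<^bsub>Gc\<^esub> b \<in> H0"
  proof -
    fix a b assume a: "a \<in> H0" and b: "b \<in> H0"
    then obtain t t' where "a = (t, 0)" "b = (t', 0)" by (cases a; cases b) (auto simp: H0_def)
    thus "a \<otimes>\<^bsub>Gc\<^esub> b \<in> H0" by (simp add: H0_def)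
  qed
qed

lemma carrier_eq: "{g. red g = g} = {0..<3} \<times> Acar"
proof -
  have "red g = g \<longleftrightarrow> g \<in> {0..<3} \<times> Acar" for g
  proof -
    obtain t a where g: "g = (t, a)" by (cases g)
    have "red (t, a) = (t, a) \<longleftrightarrow> t mod 3 = t \<and> rd a = a" by simp
    thus ?thesis using mod_self_iff[of 3 t] g by (simp add: Acar_def)
  qed
  thus ?thesis by auto
qed

lemma fin_carrier: "finite (carrier Gc)" by (simp add: carrier_eq fin_Acar)
lemma card_carrier: "card (carrier Gc) = 3 * card Acar"
  by (simp add: carrier_eq card_cartesian_product)

definition blk :: "int \<times> int \<times> int \<Rightarrow> (int \<times> int \<times> int \<times> int) set" where
  "blk s = {(1, rd s), (2, rd (ph s)), (1, rd (- s)), (2, rd (- ph s))}"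
definition blk' :: "int \<times> int \<times> int \<Rightarrow> (int \<times> int \<times> int \<times> int) set" where
  "blk' s = {(2, rd s), (1, rd (ph s)), (2, rd (- s)), (1, rd (- ph s))}"

lemma blk_rd: "blk (rd c) = blk c" by (simp add: blk_def)
lemma blk'_rd: "blk' (rd c) = blk' c" by (simp add: blk'_def)
lemma blk_neg: "blk (- s) = blk s" by (auto simp: blk_def)
lemma blk'_ph: "blk' (ph s) = blk s" by (auto simp: blk_def blk'_def rd_phph rd_neg_phph)
lemma blk'_negph: "blk' (- ph s) = blk s"
proof -
  have "rd (ph (ph s)) = rd (- s)" by (rule rd_phph)
  thus ?thesis by (auto simp: blk_def blk'_def rd_phph rd_neg_phph)
qed

lemma blk_alt: assumes "rd c = rd s \<or> rd c = rd (- s)" shows "blk c = blk s"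
  using assms by (metis blk_rd blk_neg)
lemma blk'_alt: assumes "rd c = rd (ph s) \<or> rd c = rd (- ph s)" shows "blk' c = blk s"
  using assms by (metis blk'_rd blk'_ph blk'_negph)

definition hf :: "int \<times> int \<times> int \<Rightarrow> int \<times> int \<times> int" where
  "hf u = (case u of (x,y,z) \<Rightarrow> (((w+1) div 2)*x, ((w+1) div 2)*y, ((r+1) div 2)*z))"

lemma half_aux: fixes m x :: int assumes "odd m" shows "((m+1) div 2 * x + (m+1) div 2 * x) mod m = x mod m"
proof -
  obtain k where k: "m = 2*k+1" using assms by (metis oddE)
  have "(m+1) div 2 = k + 1" using k by simp
  hence "(m+1) div 2 * x + (m+1) div 2 * x = x + m * x" using k by (simp add: algebra_simps)
  thus ?thesis by simp
qed

lemma rd_hf: "rd (hf u + hf u) = rd u"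
proof (cases u rule: prod_cases3)
  case (fields x y z)
  have "hf u + hf u = ((w+1) div 2 * x + (w+1) div 2 * x, (w+1) div 2 * y + (w+1) div 2 * y,
     (r+1) div 2 * z + (r+1) div 2 * z)" by (simp add: hf_def fields)
  hence "rd (hf u + hf u) = (x mod w, y mod w, z mod r)"
    by (simp only: rd_simp half_aux[OF ow] half_aux[OF orr])
  thus ?thesis using fields by simp
qed

lemma rd_neg_cong: "rd c = rd u \<Longrightarrow> rd (- c) = rd (- u)"
  by (metis rd_neg)

lemma wit_gen:
  assumes "\<sigma> \<in> Acar" "\<sigma> \<noteq> 0"
    and A: "\<And>m. m \<in> S \<Longrightarrow> \<sigma> = rd m \<or> \<sigma> = rd (- m) \<Longrightarrow> \<exists>x\<in>blk m. \<exists>y\<in>blk m. x \<noteq> y \<and> red (x - y) = d"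
    and B: "\<And>m. m \<in> S \<Longrightarrow> \<sigma> = rd (ph m) \<or> \<sigma> = rd (- ph m) \<Longrightarrow> \<exists>x\<in>blk m. \<exists>y\<in>blk m. x \<noteq> y \<and> red (x - y) = d"
  shows "\<exists>s\<in>S. \<exists>x\<in>blk s. \<exists>y\<in>blk s. x \<noteq> y \<and> red (x - y) = d"
proof -
  define m where "m = Min (Orb \<sigma>)"
  have mS: "m \<in> S" and sm: "\<sigma> \<in> Orb m" using rep[OF assms(1,2)] m_def by auto
  from sm have "\<sigma> = rd m \<or> \<sigma> = rd (ph m) \<or> \<sigma> = rd (- m) \<or> \<sigma> = rd (- ph m)" by (simp add: Orb_def)
  thus ?thesis using A[OF mS] B[OF mS] mS by blast
qed

lemma witness:
  assumes "d \<in> carrier Gc" "d \<notin> H0"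
  shows "\<exists>s\<in>S. \<exists>x\<in>blk s. \<exists>y\<in>blk s. x \<noteq> y \<and> red (x - y) = d"
proof -
  obtain t a where d: "d = (t, a)" by (cases d)
  have t: "t mod 3 = t" and aA: "rd a = a" using assms(1) d by auto
  have a0: "a \<noteq> 0" using assms d t aA by (auto simp: H0_def)
  define h where "h = hf a"
  have ha: "rd (h + h) = a" using rd_hf aA h_def by simp
  define c where "c = - (ph h + h)"
  define c' where "c' = ph h + h"
  have I1: "rd (ph c - c) = a"
  proof -
    have "ph c - c = h - ph (ph h)" by (simp add: c_def algebra_simps)
    thus ?thesis using rd_LI ha by simp
  qed
  have I2: "rd (c' - ph c') = a"
  proof -
    have "c' - ph c' = h - ph (ph h)" by (simp add: c'_def algebra_simps)
    thus ?thesis using rd_LI ha by simp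
  qed
  have cc: "c' = - c" "c = - c'" by (simp_all add: c_def c'_def)
  have t3: "t = 0 \<or> t = 1 \<or> t = 2" using t mod_self_iff[of 3 t] by auto
  have rc_nz: "rd c \<noteq> 0"
  proof
    assume "rd c = 0"
    hence "rd (ph (rd c) - rd c) = 0" by simp
    thus False using I1 a0 by simp
  qed
  have rc'_nz: "rd c' \<noteq> 0"
  proof
    assume "rd c' = 0"
    hence "rd (rd c' - ph (rd c')) = 0" by simp
    thus False using I2 a0 by simp
  qed
  have rh_nz: "rd h \<noteq> 0"
  proof
    assume "rd h = 0"
    hence "rd (rd h + rd h) = 0" by simp
    thus False using ha a0 by simp
  qed
  from t3 show ?thesis
  proof (elim disjE)
    assume t0: "t = 0"
    define \<sigma> where "\<sigma> = rd h"
    have sn: "rd \<sigma> \<noteq> 0" using rh_nz \<sigma>_def by simp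
    have df: "red ((q, rd \<sigma>) - (q, rd (- \<sigma>))) = d" for q
      using ha by (simp add: d t0 \<sigma>_def)
    show ?thesis
    proof (rule wit_gen[of \<sigma>])
      show "\<sigma> \<in> Acar" "\<sigma> \<noteq> 0" using sn by (simp_all add: \<sigma>_def)
      fix m assume "m \<in> S" "\<sigma> = rd m \<or> \<sigma> = rd (- m)"
      hence "blk \<sigma> = blk m" by (intro blk_alt) (simp add: \<sigma>_def)
      moreover have "(1, rd \<sigma>) \<in> blk \<sigma>" "(1, rd (- \<sigma>)) \<in> blk \<sigma>" by (simp_all add: blk_def)
      moreover have "(1::int, rd \<sigma>) \<noteq> (1, rd (- \<sigma>))" using dist(2)[OF sn] by simp
      ultimately show "\<exists>x\<in>blk m. \<exists>y\<in>blk m. x \<noteq> y \<and> red (x - y) = d" using df by metis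
    next
      fix m assume "m \<in> S" "\<sigma> = rd (ph m) \<or> \<sigma> = rd (- ph m)"
      hence "blk' \<sigma> = blk m" by (intro blk'_alt) (simp add: \<sigma>_def)
      moreover have "(2, rd \<sigma>) \<in> blk' \<sigma>" "(2, rd (- \<sigma>)) \<in> blk' \<sigma>" by (simp_all add: blk'_def)
      moreover have "(2::int, rd \<sigma>) \<noteq> (2, rd (- \<sigma>))" using dist(2)[OF sn] by simp
      ultimately show "\<exists>x\<in>blk m. \<exists>y\<in>blk m. x \<noteq> y \<and> red (x - y) = d" using df by metis
    qed
  next
    assume t1: "t = 1"
    define \<sigma> where "\<sigma> = rd c"
    show ?thesis
    proof (rule wit_gen[of \<sigma>])
      show "\<sigma> \<in> Acar" "\<sigma> \<noteq> 0" using rc_nz by (simp_all add: \<sigma>_def)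
      fix m assume "m \<in> S" "\<sigma> = rd m \<or> \<sigma> = rd (- m)"
      hence "blk \<sigma> = blk m" by (intro blk_alt) (simp add: \<sigma>_def)
      moreover have "(2, rd (ph \<sigma>)) \<in> blk \<sigma>" "(1, rd \<sigma>) \<in> blk \<sigma>" by (simp_all add: blk_def)
      moreover have "red ((2, rd (ph \<sigma>)) - (1, rd \<sigma>)) = d" using I1 by (simp add: d t1 \<sigma>_def)
      ultimately show "\<exists>x\<in>blk m. \<exists>y\<in>blk m. x \<noteq> y \<and> red (x - y) = d" by (metis prod.inject zero_neq_one numeral_One numeral_eq_iff semiring_norm(85))
    next
      fix m assume "m \<in> S" "\<sigma> = rd (ph m) \<or> \<sigma> = rd (- ph m)"
      hence "rd c' = rd (- ph m) \<or> rd c' = rd (- (- ph m))" unfolding cc(1) \<sigma>_def using rd_neg_cong by blast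
      hence "rd c' = rd (- ph m) \<or> rd c' = rd (ph m)" by (simp only: minus_minus)
      hence "blk' c' = blk m" by (intro blk'_alt) auto
      moreover have "(2, rd c') \<in> blk' c'" "(1, rd (ph c')) \<in> blk' c'" by (simp_all add: blk'_def)
      moreover have "red ((2, rd c') - (1, rd (ph c'))) = d" using I2 by (simp add: d t1)
      ultimately show "\<exists>x\<in>blk m. \<exists>y\<in>blk m. x \<noteq> y \<and> red (x - y) = d" by (metis prod.inject zero_neq_one numeral_One numeral_eq_iff semiring_norm(85))
    qed
  next
    assume t2: "t = 2"
    define \<sigma> where "\<sigma> = rd c'"
    show ?thesis
    proof (rule wit_gen[of \<sigma>])
      show "\<sigma> \<in> Acar" "\<sigma> \<noteq> 0" using rc'_nz by (simp_all add: \<sigma>_def)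
      fix m assume "m \<in> S" "\<sigma> = rd m \<or> \<sigma> = rd (- m)"
      hence "blk \<sigma> = blk m" by (intro blk_alt) (simp add: \<sigma>_def)
      moreover have "(1, rd \<sigma>) \<in> blk \<sigma>" "(2, rd (ph \<sigma>)) \<in> blk \<sigma>" by (simp_all add: blk_def)
      moreover have "red ((1, rd \<sigma>) - (2, rd (ph \<sigma>))) = d" using I2 by (simp add: d t2 \<sigma>_def)
      ultimately show "\<exists>x\<in>blk m. \<exists>y\<in>blk m. x \<noteq> y \<and> red (x - y) = d" by (metis prod.inject zero_neq_one numeral_One numeral_eq_iff semiring_norm(85))
    next
      fix m assume "m \<in> S" "\<sigma> = rd (ph m) \<or> \<sigma> = rd (- ph m)"
      hence "rd c = rd (- ph m) \<or> rd c = rd (- (- ph m))" unfolding cc(2) \<sigma>_def using rd_neg_cong by blast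
      hence "rd c = rd (- ph m) \<or> rd c = rd (ph m)" by (simp only: minus_minus)
      hence "blk' c = blk m" by (intro blk'_alt) auto
      moreover have "(1, rd (ph c)) \<in> blk' c" "(2, rd c) \<in> blk' c" by (simp_all add: blk'_def)
      moreover have "red ((1, rd (ph c)) - (2, rd c)) = d" using I1 by (simp add: d t2)
      ultimately show "\<exists>x\<in>blk m. \<exists>y\<in>blk m. x \<noteq> y \<and> red (x - y) = d" by (metis prod.inject zero_neq_one numeral_One numeral_eq_iff semiring_norm(85))
    qed
  qed
qed


definition nb :: "int \<times> int \<times> int \<Rightarrow> (int \<times> int \<times> int \<times> int) set" where
  "nb s = {(2, rd (- s)), (1, rd (- ph s)), (2, rd s), (1, rd (ph s))}"

lemma blk_carrier: "blk s \<subseteq> carrier Gc" by (auto simp: blk_def)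
lemma fin_blk: "finite (blk s)" by (simp add: blk_def)

lemma card_blk: assumes "s \<in> S" shows "card (blk s) = 4"
  using dist[OF S_nz[OF assms]] by (simp add: blk_def)

lemma snd_blk: "snd ` blk s = Orb s" by (auto simp: blk_def Orb_def)
lemma snd_nb: "snd ` nb s = Orb s" by (auto simp: nb_def Orb_def)

lemma blk_snd_inj: assumes "s \<in> S" "x \<in> blk s" "y \<in> blk s" "snd x = snd y" shows "x = y"
  using dist[OF S_nz[OF assms(1)]] assms(2-4) by (auto simp: blk_def)

lemma diff_nz: assumes "s \<in> S" "x \<in> blk s" "y \<in> blk s" "x \<noteq> y"
  shows "snd (red (x - y)) \<noteq> 0"
proof
  assume h: "snd (red (x - y)) = 0"
  obtain t a where x: "x = (t, a)" by (cases x)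
  obtain t' a' where y: "y = (t', a')" by (cases y)
  have "rd (a - a') = 0" using h x y by simp
  hence "rd a = rd a'" by (simp only: rd_eq_iff_diff)
  moreover have "x \<in> carrier Gc" "y \<in> carrier Gc" using blk_carrier assms(2,3) by blast+
  hence "rd a = a" "rd a' = a'" using x y by simp_all
  ultimately have "snd x = snd y" using x y by simp
  thus False using blk_snd_inj assms by blast
qed

definition P :: "int \<times> int \<times> int \<Rightarrow> int \<times> int \<times> int \<times> int \<Rightarrow> ((int \<times> int \<times> int \<times> int) \<times> (int \<times> int \<times> int \<times> int)) set" where
  "P s d = {(x, y). x \<in> blk s \<and> y \<in> blk s \<and> x \<noteq> y \<and> red (x - y) = d}"

lemma fin_P: "finite (P s d)"
proof -
  have "P s d \<subseteq> blk s \<times> blk s" by (auto simp: P_def)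
  thus ?thesis using fin_blk finite_subset by blast
qed

lemma card_pairs: assumes "finite B"
  shows "card {(x, y). x \<in> B \<and> y \<in> B \<and> x \<noteq> y} = card B * card B - card B"
proof -
  have e: "{(x, y). x \<in> B \<and> y \<in> B \<and> x \<noteq> y} = B \<times> B - (\<lambda>x. (x, x)) ` B" by auto
  have "card (B \<times> B - (\<lambda>x. (x, x)) ` B) = card (B \<times> B) - card ((\<lambda>x. (x, x)) ` B)"
    by (rule card_Diff_subset) (use assms in auto)
  also have "card ((\<lambda>x. (x, x)) ` B) = card B" by (rule card_image) (simp add: inj_on_def)
  finally show ?thesis using e by (simp add: card_cartesian_product)
qed

lemma sumP: assumes "s \<in> S" shows "(\<Sum>d\<in>carrier Gc. card (P s d)) = 12"
proof -
  have "card (\<Union>d\<in>carrier Gc. P s d) = (\<Sum>d\<in>carrier Gc. card (P s d))"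
  proof (rule card_UN_disjoint)
    show "finite (carrier Gc)" by (rule fin_carrier)
    show "\<forall>d\<in>carrier Gc. finite (P s d)" using fin_P by blast
    show "\<forall>d\<in>carrier Gc. \<forall>d'\<in>carrier Gc. d \<noteq> d' \<longrightarrow> P s d \<inter> P s d' = {}"
      by (auto simp: P_def)
  qed
  hence "(\<Sum>d\<in>carrier Gc. card (P s d)) = card (\<Union>d\<in>carrier Gc. P s d)" by simp
  also have "(\<Union>d\<in>carrier Gc. P s d) = {(x, y). x \<in> blk s \<and> y \<in> blk s \<and> x \<noteq> y}"
    by (auto simp: P_def)
  also have "card \<dots> = 12" using card_pairs[OF fin_blk] card_blk[OF assms] by simp
  finally show ?thesis .
qed

lemma P_H: assumes "s \<in> S" "d \<in> H0" shows "P s d = {}"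
proof -
  have False if "(x, y) \<in> P s d" for x y
  proof -
    have "x \<in> blk s" "y \<in> blk s" "x \<noteq> y" "red (x - y) = d" using that by (simp_all add: P_def)
    hence "snd d \<noteq> 0" using diff_nz[OF assms(1)] by blast
    moreover have "snd d = 0" using assms(2) by (simp add: H0_def)
    ultimately show False by simp
  qed
  thus ?thesis by auto
qed

lemma sum_ge1_eq:
  fixes f :: "'x \<Rightarrow> nat"
  assumes "finite A" "\<forall>x\<in>A. 1 \<le> f x" "sum f A = card A" "x \<in> A"
  shows "f x = 1"
proof (rule ccontr)
  assume "f x \<noteq> 1"
  hence "1 < f x" using assms(2,4) by force
  hence "(\<Sum>x\<in>A. 1) < sum f A" using assms by (intro sum_strict_mono_ex1) auto
  thus False using assms(3) by simp
qed

lemma dc_eq: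
  assumes "distinct xs" "set xs = S"
  shows "diff_count Gc (map blk xs) d = (\<Sum>s\<in>S. card (P s d))"
proof -
  have e: "card {(x, y). x \<in> blk s \<and> y \<in> blk s \<and> x \<noteq> y \<and> x \<otimes>\<^bsub>Gc\<^esub> inv\<^bsub>Gc\<^esub> y = d} = card (P s d)" for s
  proof -
    have key: "(x \<in> blk s \<and> y \<in> blk s \<and> x \<noteq> y \<and> x \<otimes>\<^bsub>Gc\<^esub> inv\<^bsub>Gc\<^esub> y = d) \<longleftrightarrow>
       (x \<in> blk s \<and> y \<in> blk s \<and> x \<noteq> y \<and> red (x - y) = d)" for x y
      using diff_Gc blk_carrier by (metis (no_types) subsetD)
    have "{(x, y). x \<in> blk s \<and> y \<in> blk s \<and> x \<noteq> y \<and> x \<otimes>\<^bsub>Gc\<^esub> inv\<^bsub>Gc\<^esub> y = d} = P s d"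
      unfolding P_def by (simp only: key)
    thus ?thesis by simp
  qed
  have "diff_count Gc (map blk xs) d = sum_list (map (\<lambda>s. card (P s d)) xs)"
    unfolding diff_count_def by (simp only: map_map comp_def e)
  also have "\<dots> = (\<Sum>s\<in>S. card (P s d))" using assms by (simp add: sum_list_distinct_conv_sum_set)
  finally show ?thesis .
qed

lemma counts:
  shows "\<forall>d\<in>H0. (\<Sum>s\<in>S. card (P s d)) = 0"
    and "\<forall>d\<in>carrier Gc - H0. (\<Sum>s\<in>S. card (P s d)) = 1"
proof -
  define f where "f d = (\<Sum>s\<in>S. card (P s d))" for d
  have f0: "\<forall>d\<in>H0. f d = 0" using P_H by (simp add: f_def)
  thus "\<forall>d\<in>H0. (\<Sum>s\<in>S. card (P s d)) = 0" by (simp add: f_def)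
  have f1: "\<forall>d\<in>carrier Gc - H0. 1 \<le> f d"
  proof
    fix d assume d: "d \<in> carrier Gc - H0"
    then obtain s x y where s: "s \<in> S" "x \<in> blk s" "y \<in> blk s" "x \<noteq> y" "red (x - y) = d"
      using witness by blast
    have "(x, y) \<in> P s d" using s by (simp add: P_def)
    hence "1 \<le> card (P s d)" using fin_P by (metis One_nat_def Suc_leI card_gt_0_iff empty_iff)
    also have "card (P s d) \<le> f d" unfolding f_def using s(1) fin_S by (intro member_le_sum) auto
    finally show "1 \<le> f d" .
  qed
  have H0sub: "H0 \<subseteq> carrier Gc" using sub_H0 subgroup.subset by blast
  have "sum f (carrier Gc) = (\<Sum>s\<in>S. \<Sum>d\<in>carrier Gc. card (P s d))"
    unfolding f_def by (rule sum.swap)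
  also have "\<dots> = (\<Sum>s\<in>S. 12)" using sumP by simp
  also have "\<dots> = 12 * card S" by simp
  finally have tot: "sum f (carrier Gc) = 12 * card S" .
  have "sum f (carrier Gc) = sum f (carrier Gc - H0) + sum f H0"
    by (rule sum.subset_diff[OF H0sub fin_carrier])
  hence s1: "sum f (carrier Gc - H0) = 12 * card S" using tot f0 by simp
  have cA: "card Acar = 4 * card S + 1"
    using card_S zero_Acar fin_Acar by (metis card_Diff_singleton_if add.commute card_0_eq empty_iff Suc_pred' gr0I One_nat_def Suc_eq_plus1)
  have "card (carrier Gc - H0) = card (carrier Gc) - card H0"
    by (rule card_Diff_subset) (use H0sub fin_carrier finite_subset in auto)
  also have "\<dots> = 12 * card S" using card_carrier card_H0 cA by simp
  finally have "sum f (carrier Gc - H0) = card (carrier Gc - H0)" using s1 by simp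
  thus "\<forall>d\<in>carrier Gc - H0. (\<Sum>s\<in>S. card (P s d)) = 1"
    using sum_ge1_eq[OF _ f1] fin_carrier unfolding f_def by blast
qed

lemma neg_blk: assumes "s \<in> S" shows "neg_block Gc (blk s) = nb s"
proof -
  have "neg_block Gc (blk s) = (\<lambda>b. red (- b)) ` blk s"
    unfolding neg_block_def using blk_carrier[of s] by (intro image_cong) (auto simp: inv_Gc subset_iff)
  also have "\<dots> = nb s" by (auto simp: blk_def nb_def)
  finally show ?thesis .
qed

lemma blk_nb_disj: assumes "s \<in> S" shows "blk s \<inter> nb s = {}"
  using dist[OF S_nz[OF assms]] by (auto simp: blk_def nb_def)

lemma diff_S_disj: assumes "s \<in> S" "s' \<in> S" "s \<noteq> s'" "U \<in> {blk s, nb s}" "V \<in> {blk s', nb s'}"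
  shows "U \<inter> V = {}"
proof -
  from assms(4) have "U = blk s \<or> U = nb s" by simp
  hence u: "snd ` U = Orb s" by (elim disjE) (simp_all only: snd_blk snd_nb)
  from assms(5) have "V = blk s' \<or> V = nb s'" by simp
  hence "snd ` V = Orb s'" by (elim disjE) (simp_all only: snd_blk snd_nb)
  note u this
  thus ?thesis using S_disj assms(1-3) by blast
qed

lemma BRDF: "\<exists>Bs. is_BRDF Gc H0 4 1 Bs"
proof -
  obtain xs where xs: "distinct xs" "set xs = S" using finite_distinct_list[OF fin_S] by blast
  let ?Bs = "map blk xs"
  have r1: "\<forall>B\<in>set ?Bs. B \<subseteq> carrier Gc \<and> finite B \<and> card B = 4"
    using xs blk_carrier fin_blk card_blk by auto
  have r2: "\<forall>d\<in>carrier Gc - H0. diff_count Gc ?Bs d = 1" using counts(2) dc_eq[OF xs] by simp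
  have r3: "\<forall>d\<in>H0. diff_count Gc ?Bs d = 0" using counts(1) dc_eq[OF xs] by simp
  have b2: "\<forall>B\<in>set ?Bs. B \<inter> H0 = {}"
  proof
    fix B assume "B \<in> set ?Bs"
    then obtain s where s: "s \<in> S" "B = blk s" using xs by auto
    have "0 \<notin> snd ` B" using s snd_blk Orb_nz S_nz by auto
    thus "B \<inter> H0 = {}" by (force simp: H0_def)
  qed
  define n where "n = length xs"
  define L where "L = ?Bs @ map (neg_block Gc) ?Bs"
  define sel where "sel i = xs ! (if i < n then i else i - n)" for i
  have lenL: "length L = 2 * n" by (simp add: L_def n_def)
  have selS: "i < 2 * n \<Longrightarrow> sel i \<in> S" for i using xs unfolding sel_def n_def by auto
  have Li: "i < 2 * n \<Longrightarrow> L ! i = (if i < n then blk (sel i) else nb (sel i))" for i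
    using selS[of i] by (auto simp: L_def nth_append sel_def n_def neg_blk)
  have b3: "\<forall>i<length L. \<forall>j<length L. i \<noteq> j \<longrightarrow> L ! i \<inter> L ! j = {}"
  proof (intro allI impI)
    fix i j assume ij: "i < length L" "j < length L" "i \<noteq> j"
    show "L ! i \<inter> L ! j = {}"
    proof (cases "sel i = sel j")
      case False
      thus ?thesis using diff_S_disj[OF selS selS False] Li ij lenL by auto
    next
      case True
      have "(if i < n then i else i - n) = (if j < n then j else j - n)"
        using True xs(1) ij lenL unfolding sel_def n_def by (auto simp: nth_eq_iff_index_eq split: if_splits)
      hence ex: "(i < n \<and> \<not> j < n) \<or> (j < n \<and> \<not> i < n)" using ij by (auto split: if_splits)
      have si: "sel i \<in> S" using selS ij lenL by simp
      show ?thesis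
      proof (cases "i < n")
        case it: True
        hence "\<not> j < n" using ex by simp
        hence "L ! i = blk (sel i)" "L ! j = nb (sel i)" using Li ij lenL it \<open>sel i = sel j\<close> by simp_all
        thus ?thesis using blk_nb_disj[OF si] by simp
      next
        case it: False
        hence "j < n" using ex by simp
        hence "L ! i = nb (sel i)" "L ! j = blk (sel i)" using Li ij lenL it \<open>sel i = sel j\<close> by simp_all
        thus ?thesis using blk_nb_disj[OF si] by blast
      qed
    qed
  qed
  have "is_BRDF Gc H0 4 1 ?Bs"
    unfolding is_BRDF_def is_RDF_def using r1 r2 r3 b2 b3 by (simp add: L_def Let_def)
  thus ?thesis by blast
qed

end


lemma transfer_nat:
  fixes G :: "('a::countable) monoid"
  assumes grp: "group G" and fin: "finite (carrier G)" and sub: "subgroup H G"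
    and br: "is_BRDF G H k lam Bs"
  shows "\<exists>(G'::nat monoid) H' Bs'. group G' \<and> finite (carrier G') \<and> card (carrier G') = card (carrier G)
     \<and> subgroup H' G' \<and> card H' = card H \<and> is_BRDF G' H' k lam Bs'"
proof -
  let ?f = "to_nat :: 'a \<Rightarrow> nat"
  have injf: "inj ?f" by simp
  have fg[simp]: "from_nat (to_nat x) = (x::'a)" for x by simp
  define G' :: "nat monoid" where "G' = \<lparr>carrier = ?f ` carrier G,
     monoid.mult = (\<lambda>a b. ?f (from_nat a \<otimes>\<^bsub>G\<^esub> from_nat b)), one = ?f \<one>\<^bsub>G\<^esub>\<rparr>"
  have cG'[simp]: "carrier G' = ?f ` carrier G" by (simp add: G'_def)
  have mG'[simp]: "?f x \<otimes>\<^bsub>G'\<^esub> ?f y = ?f (x \<otimes>\<^bsub>G\<^esub> y)" for x y by (simp add: G'_def)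
  have oG'[simp]: "\<one>\<^bsub>G'\<^esub> = ?f \<one>\<^bsub>G\<^esub>" by (simp add: G'_def)
  have grp': "group G'"
  proof (rule groupI)
    fix a b assume "a \<in> carrier G'" "b \<in> carrier G'"
    then obtain x y where "x \<in> carrier G" "y \<in> carrier G" "a = ?f x" "b = ?f y" by auto
    thus "a \<otimes>\<^bsub>G'\<^esub> b \<in> carrier G'" using group.is_monoid[OF grp] by (simp add: monoid.m_closed)
  next
    show "\<one>\<^bsub>G'\<^esub> \<in> carrier G'" using group.is_monoid[OF grp] by (simp add: monoid.one_closed)
  next
    fix a b c assume "a \<in> carrier G'" "b \<in> carrier G'" "c \<in> carrier G'"
    then obtain x y z where "x \<in> carrier G" "y \<in> carrier G" "z \<in> carrier G" "a = ?f x" "b = ?f y" "c = ?f z" by auto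
    thus "a \<otimes>\<^bsub>G'\<^esub> b \<otimes>\<^bsub>G'\<^esub> c = a \<otimes>\<^bsub>G'\<^esub> (b \<otimes>\<^bsub>G'\<^esub> c)"
      using group.is_monoid[OF grp] by (simp add: monoid.m_assoc)
  next
    fix a assume "a \<in> carrier G'"
    then obtain x where "x \<in> carrier G" "a = ?f x" by auto
    thus "\<one>\<^bsub>G'\<^esub> \<otimes>\<^bsub>G'\<^esub> a = a" using group.is_monoid[OF grp] by (simp add: monoid.l_one)
  next
    fix a assume "a \<in> carrier G'"
    then obtain x where x: "x \<in> carrier G" "a = ?f x" by auto
    have "inv\<^bsub>G\<^esub> x \<in> carrier G" "inv\<^bsub>G\<^esub> x \<otimes>\<^bsub>G\<^esub> x = \<one>\<^bsub>G\<^esub>"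
      using x grp by (simp_all add: group.inv_closed group.l_inv)
    thus "\<exists>y\<in>carrier G'. y \<otimes>\<^bsub>G'\<^esub> a = \<one>\<^bsub>G'\<^esub>" using x by (intro bexI[of _ "?f (inv\<^bsub>G\<^esub> x)"]) auto
  qed
  have inv': "inv\<^bsub>G'\<^esub> (?f x) = ?f (inv\<^bsub>G\<^esub> x)" if "x \<in> carrier G" for x
  proof (rule group.inv_equality[OF grp'])
    show "?f (inv\<^bsub>G\<^esub> x) \<otimes>\<^bsub>G'\<^esub> ?f x = \<one>\<^bsub>G'\<^esub>" using that grp by (simp add: group.l_inv)
    show "?f x \<in> carrier G'" using that by simp
    show "?f (inv\<^bsub>G\<^esub> x) \<in> carrier G'" using that grp by (simp add: group.inv_closed)
  qed
  have dif': "?f x \<otimes>\<^bsub>G'\<^esub> inv\<^bsub>G'\<^esub> (?f y) = ?f (x \<otimes>\<^bsub>G\<^esub> inv\<^bsub>G\<^esub> y)"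
    if "x \<in> carrier G" "y \<in> carrier G" for x y using that inv' by simp
  have Hsub: "H \<subseteq> carrier G" using sub subgroup.subset by blast
  have sub': "subgroup (?f ` H) G'"
  proof (rule group.subgroupI[OF grp'])
    show "?f ` H \<subseteq> carrier G'" using Hsub by auto
    show "?f ` H \<noteq> {}" using sub subgroup.one_closed by blast
    fix a assume "a \<in> ?f ` H"
    then obtain x where x: "x \<in> H" "a = ?f x" by auto
    thus "inv\<^bsub>G'\<^esub> a \<in> ?f ` H" using inv' Hsub sub subgroup.m_inv_closed by fastforce
  next
    fix a b assume "a \<in> ?f ` H" "b \<in> ?f ` H"
    then obtain x y where "x \<in> H" "y \<in> H" "a = ?f x" "b = ?f y" by auto
    thus "a \<otimes>\<^bsub>G'\<^esub> b \<in> ?f ` H" using sub subgroup.m_closed by fastforce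
  qed
  let ?Bs = "map (image ?f) Bs"
  have Bsub: "B \<subseteq> carrier G" if "B \<in> set Bs" for B using br that by (simp add: is_BRDF_def is_RDF_def)
  have dc: "diff_count G' ?Bs (?f d) = diff_count G Bs d" if "d \<in> carrier G" for d
  proof -
    have e: "card {(x', y'). x' \<in> ?f ` B \<and> y' \<in> ?f ` B \<and> x' \<noteq> y' \<and> x' \<otimes>\<^bsub>G'\<^esub> inv\<^bsub>G'\<^esub> y' = ?f d}
      = card {(x, y). x \<in> B \<and> y \<in> B \<and> x \<noteq> y \<and> x \<otimes>\<^bsub>G\<^esub> inv\<^bsub>G\<^esub> y = d}" if B: "B \<in> set Bs" for B
    proof -
      have "{(x', y'). x' \<in> ?f ` B \<and> y' \<in> ?f ` B \<and> x' \<noteq> y' \<and> x' \<otimes>\<^bsub>G'\<^esub> inv\<^bsub>G'\<^esub> y' = ?f d}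
        = map_prod ?f ?f ` {(x, y). x \<in> B \<and> y \<in> B \<and> x \<noteq> y \<and> x \<otimes>\<^bsub>G\<^esub> inv\<^bsub>G\<^esub> y = d}"
        (is "?L = ?R")
      proof
        show "?L \<subseteq> ?R"
        proof
          fix p assume "p \<in> ?L"
          then obtain x y where p: "p = (?f x, ?f y)" "x \<in> B" "y \<in> B" "?f x \<noteq> ?f y"
             "?f x \<otimes>\<^bsub>G'\<^esub> inv\<^bsub>G'\<^esub> (?f y) = ?f d" by auto
          have "x \<otimes>\<^bsub>G\<^esub> inv\<^bsub>G\<^esub> y = d" using p dif' Bsub[OF B] injf by (metis inj_eq subsetD)
          thus "p \<in> ?R" using p by auto
        qed
        show "?R \<subseteq> ?L" using dif' Bsub[OF B] by auto
      qed
      moreover have "inj_on (map_prod ?f ?f) Q" for Q using prod.inj_map[OF injf injf] by (metis inj_on_subset subset_UNIV)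
      ultimately show ?thesis by (simp add: card_image)
    qed
    show ?thesis unfolding diff_count_def using e by (simp add: comp_def cong: map_cong)
  qed
  have negb: "neg_block G' (?f ` B) = ?f ` neg_block G B" if "B \<in> set Bs" for B
    unfolding neg_block_def using Bsub[OF that] inv' by (auto simp: image_image subset_iff)
  define L where "L = Bs @ map (neg_block G) Bs"
  have L': "?Bs @ map (neg_block G') ?Bs = map (image ?f) L"
    using negb by (simp add: L_def comp_def cong: map_cong)
  have br': "is_BRDF G' (?f ` H) k lam ?Bs"
    unfolding is_BRDF_def is_RDF_def Let_def L'
  proof (intro conjI ballI allI impI)
    fix B' assume "B' \<in> set ?Bs"
    then obtain B where B: "B \<in> set Bs" "B' = ?f ` B" by auto
    have "finite B" "card B = k" "B \<subseteq> carrier G" using br B by (auto simp: is_BRDF_def is_RDF_def)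
    thus "B' \<subseteq> carrier G'" "finite B'" "card B' = k" using B by (auto simp: card_image inj_on_def)
    have "B \<inter> H = {}" using br B by (auto simp: is_BRDF_def)
    thus "B' \<inter> ?f ` H = {}" using B injf by (auto simp: inj_eq)
  next
    fix d' assume "d' \<in> carrier G' - ?f ` H"
    then obtain d where d: "d \<in> carrier G" "d \<notin> H" "d' = ?f d" by auto
    thus "diff_count G' ?Bs d' = lam" using dc br by (auto simp: is_BRDF_def is_RDF_def)
  next
    fix d' assume "d' \<in> ?f ` H"
    then obtain d where d: "d \<in> H" "d' = ?f d" by auto
    thus "diff_count G' ?Bs d' = 0" using dc br Hsub by (auto simp: is_BRDF_def is_RDF_def)
  next
    fix i j assume ij: "i < length (map (image ?f) L)" "j < length (map (image ?f) L)" "i \<noteq> j"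
    have "L ! i \<inter> L ! j = {}" using br ij by (simp add: is_BRDF_def Let_def L_def)
    thus "map (image ?f) L ! i \<inter> map (image ?f) L ! j = {}" using ij injf
      by (simp add: image_Int[symmetric])
  qed
  have ci: "card (?f ` A) = card A" for A
    by (rule card_image) (rule inj_on_subset[OF injf subset_UNIV])
  show ?thesis
    apply (rule exI[of _ G'], rule exI[of _ "?f ` H"], rule exI[of _ ?Bs])
    using grp' fin sub' br' by (simp add: ci)
qed


theorem mainTheorem7:
  fixes v :: nat
  assumes "v > 0"
    and "\<forall>p. Factorial_Ring.prime p \<and> p dvd v \<longrightarrow> p ^ Factorial_Ring.multiplicity p v mod 4 = 1"
  shows "exists_BRDF (3 * v) 3 4 1"
proof -
  obtain w r j where d: "v = w^2 * r" "odd w" "odd r" "[j*j = -1] (mod int r)"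
    using decomp[OF assms] by blast
  have w0: "int w > 0" using d(2) by (cases w) auto
  have r0: "int r > 0" using d(3) by (cases r) auto
  interpret c: cons "int w" "int r" j
    using w0 r0 d by unfold_locales simp_all
  obtain Bs where B: "is_BRDF c.Gc c.H0 4 1 Bs" using c.BRDF by blast
  obtain G' :: "nat monoid" and H' Bs' where T: "group G'" "finite (carrier G')" "card (carrier G') = card (carrier c.Gc)"
     "subgroup H' G'" "card H' = card c.H0" "is_BRDF G' H' 4 1 Bs'"
    using transfer_nat[OF c.grp c.fin_carrier c.sub_H0 B] by blast
  have "card (carrier c.Gc) = 3 * v" using c.card_carrier c.card_Acar d(1) by (simp add: power2_eq_square)
  thus ?thesis unfolding exists_BRDF_def using T c.card_H0 by auto
qed

end
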